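(* Let $X,Y\subseteq\mathbb{R}^{\mathbb{Z}_<}$, equipped with the metric $d(\mathbf{x},\mathbf{y})=|\mathbf{y}-\mathbf{x}|$. A function $f:X\to Y$ is $\iota$-continuous if and only if $f$ satisfies $\mathrm{ED}$.
   Context: $\mathbb{R}^{\mathbb{Z}_<}$ is the set of formal series $\sum_{i\ge -k}a_i\epsilon^i$ ($k\in\mathbb{N}\cup\{0\}$, $a_i\in\mathbb{R}$), with coefficientwise addition, Cauchy-product multiplication and lexicographic order; $|\cdot|$ is the associated absolute value. For $m\in\mathbb{N}\cup\{0\}$ let $\Delta^m=\{a\epsilon^m:a\in\mathbb{R}\}$ (with $a\ne0$ when $m\ge1$) and $\Delta^{\downarrow m}=\bigcup_{n\ge m}\Delta^n$. In a subset $Z$, $B_{\mathbf{x}}(\mathbf{r})=\{\mathbf{z}\in Z:d(\mathbf{x},\mathbf{z})<\mathbf{r}\}$, and $O\subseteq Z$ is $\iota$-open iff for every $\mathbf{x}\in O$ there is a positive $\iota\in\Delta^{\downarrow m}$ (some $m$) with $B_{\mathbf{x}}(\iota)\subseteq O$. $f$ is $\iota$-continuous iff $f^{-1}(U)$ is $\iota$-open in $X$ whenever $U\subseteq Y$ is $\iota$-open. $f$ satisfies $\mathrm{ED}$ iff at every $\mathbf{c}\in X$, for every positive $\iota_1\in\mathbb{R}^{\mathbb{Z}_<}$ there is a positive $\iota_2\in\mathbb{R}^{\mathbb{Z}_<}$ with $|f(\mathbf{x})-f(\mathbf{c})|<\iota_1$ whenever $\mathbf{x}\in X$ and $|\mathbf{x}-\mathbf{c}|<\iota_2$.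 *)

theory Defs
  imports "HOL-Computational_Algebra.Formal_Laurent_Series"
begin

text \<open>The field R^{Z_<} is modelled by real fls (formal Laurent series with finitely
many negative powers, Cauchy product); epsilon is fls_X.\<close>

definition lc_pos :: "real fls \<Rightarrow> bool" where
  "lc_pos x \<longleftrightarrow> x \<noteq> 0 \<and> fls_nth x (fls_subdegree x) > 0"

definition lc_less :: "real fls \<Rightarrow> real fls \<Rightarrow> bool" where
  "lc_less x y \<longleftrightarrow> lc_pos (y - x)"

definition lc_abs :: "real fls \<Rightarrow> real fls" where
  "lc_abs x = (if lc_pos (- x) then - x else x)"

definition lc_dist :: "real fls \<Rightarrow> real fls \<Rightarrow> real fls" where
  "lc_dist x y = lc_abs (y - x)"

definition lc_ball :: "real fls set \<Rightarrow> real fls \<Rightarrow> real fls \<Rightarrow> real fls set" where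
  "lc_ball Z x r = {z \<in> Z. lc_less (lc_dist x z) r}"

definition Delta :: "nat \<Rightarrow> real fls set" where
  "Delta m = {fls_const a * fls_X ^ m | a. m \<ge> 1 \<longrightarrow> a \<noteq> 0}"

definition Delta_down :: "nat \<Rightarrow> real fls set" where
  "Delta_down m = (\<Union>n\<in>{m..}. Delta n)"

definition iota_open :: "real fls set \<Rightarrow> real fls set \<Rightarrow> bool" where
  "iota_open Z V \<longleftrightarrow> V \<subseteq> Z \<and>
     (\<forall>x\<in>V. \<exists>m \<iota>. \<iota> \<in> Delta_down m \<and> lc_pos \<iota> \<and> lc_ball Z x \<iota> \<subseteq> V)"

definition iota_continuous ::
  "real fls set \<Rightarrow> real fls set \<Rightarrow> (real fls \<Rightarrow> real fls) \<Rightarrow> bool" where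
  "iota_continuous X Y f \<longleftrightarrow>
     (\<forall>U. iota_open Y U \<longrightarrow> iota_open X {x \<in> X. f x \<in> U})"

definition ED :: "real fls set \<Rightarrow> (real fls \<Rightarrow> real fls) \<Rightarrow> bool" where
  "ED X f \<longleftrightarrow> (\<forall>c\<in>X. \<forall>\<iota>1. lc_pos \<iota>1 \<longrightarrow>
     (\<exists>\<iota>2. lc_pos \<iota>2 \<and> (\<forall>x\<in>X. lc_less (lc_abs (x - c)) \<iota>2 \<longrightarrow>
        lc_less (lc_abs (f x - f c)) \<iota>1)))"

end

theory Submission
  imports Defs
begin

lemma posI:
  fixes x :: "real fls"
  assumes "\<And>n. n < d \<Longrightarrow> fls_nth x (n) = 0" "fls_nth x (d) > 0"
  shows "lc_pos x"
proof -
  have "fls_nth x (d) \<noteq> 0" using assms(2) by simp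
  then have "x \<noteq> 0" "fls_subdegree x = d"
    using fls_nonzeroI fls_subdegree_eqI assms(1) by blast+
  then show ?thesis using assms(2) unfolding lc_pos_def by simp
qed

lemma posE:
  fixes x :: "real fls"
  assumes "lc_pos x"
  shows "\<And>n. n < fls_subdegree x \<Longrightarrow> fls_nth x (n) = 0" "fls_nth x (fls_subdegree x) > 0"
  using assms unfolding lc_pos_def by auto

lemma pos_add:
  fixes a b :: "real fls"
  assumes "lc_pos a" "lc_pos b"
  shows "lc_pos (a + b)"
proof -
  define da where "da = fls_subdegree a"
  define db where "db = fls_subdegree b"
  note A = posE[OF assms(1), folded da_def]
  note B = posE[OF assms(2), folded db_def]
  show ?thesis
  proof (rule posI[where d = "min da db"])
    fix n assume "n < min da db"
    then show "fls_nth (a + b) (n) = 0" using A B by simp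
  next
    show "fls_nth (a + b) (min da db) > 0"
      using A B by (cases "da < db"; cases "db < da"; auto simp: min_def)
  qed
qed

lemma pos_not_both:
  fixes x :: "real fls"
  shows "\<not> (lc_pos x \<and> lc_pos (- x))"
  unfolding lc_pos_def
  by (metis add.inverse_neutral equation_minus_iff fls_eq0_below_subdegree fls_subdegree_leI
        fls_uminus_nth less_asym' linorder_neqE_linordered_idom neg_less_0_iff_less nth_fls_subdegree_nonzero)

lemma pos_tri:
  fixes x :: "real fls"
  assumes "x \<noteq> 0"
  shows "lc_pos x \<or> lc_pos (- x)"
proof -
  have "fls_nth x (fls_subdegree x) \<noteq> 0" using assms by simp
  then consider "fls_nth x (fls_subdegree x) > 0" | "fls_nth x (fls_subdegree x) < 0" by linarith
  then show ?thesis
  proof cases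
    case 1 then show ?thesis by (intro disjI1 posI[where d="fls_subdegree x"]) auto
  next
    case 2 then show ?thesis by (intro disjI2 posI[where d="fls_subdegree x"]) auto
  qed
qed

definition N :: "real fls \<Rightarrow> bool" where "N x \<longleftrightarrow> x = 0 \<or> lc_pos x"

lemma N_add: "N a \<Longrightarrow> N b \<Longrightarrow> N (a + b)"
  unfolding N_def using pos_add by auto

lemma NP_add: "N a \<Longrightarrow> lc_pos b \<Longrightarrow> lc_pos (a + b)"
  unfolding N_def using pos_add by auto

lemma abs_cases: "lc_abs a = a \<and> N a \<or> lc_abs a = - a \<and> lc_pos (- a)"
  unfolding lc_abs_def N_def using pos_tri[of a] by auto

lemma N_abs_minus: "N (lc_abs a - a)"
proof -
  have "N (-a + -a)" if "lc_pos (-a)" using that pos_add N_def by blast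
  then show ?thesis using abs_cases[of a] unfolding N_def by auto
qed

lemma N_abs_plus: "N (lc_abs a + a)"
proof -
  have "N (a + a)" if "N a" using that N_add by blast
  then show ?thesis using abs_cases[of a] unfolding N_def by auto
qed

lemma triangle: "N (lc_abs a + lc_abs b - lc_abs (a + b))"
proof -
  have 1: "N ((lc_abs a - a) + (lc_abs b - b))" by (intro N_add N_abs_minus)
  have 2: "N ((lc_abs a + a) + (lc_abs b + b))" by (intro N_add N_abs_plus)
  consider "lc_abs (a+b) = a + b" | "lc_abs (a+b) = -(a+b)" using abs_cases by blast
  then show ?thesis
  proof cases
    case c1: 1
    have "lc_abs a + lc_abs b - lc_abs (a + b) = (lc_abs a - a) + (lc_abs b - b)"
      unfolding c1 by (simp add: algebra_simps)
    then show ?thesis using 1 by (simp only:)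
  next
    case c2: 2
    have "lc_abs a + lc_abs b - lc_abs (a + b) = (lc_abs a + a) + (lc_abs b + b)"
      unfolding c2 by (simp add: algebra_simps)
    then show ?thesis using 2 by (simp only:)
  qed
qed

lemma delta_below:
  fixes i :: "real fls"
  assumes "lc_pos i"
  shows "\<exists>m d. d \<in> Delta_down m \<and> lc_pos d \<and> lc_pos (i - d)"
proof -
  define k where "k = fls_subdegree i"
  define m :: nat where "m = nat (\<bar>k\<bar> + 1)"
  have mk: "int m > k" unfolding m_def by simp
  define d :: "real fls" where "d = fls_const 1 * fls_X ^ m"
  have "d \<in> Delta m" unfolding Delta_def d_def by auto
  then have "d \<in> Delta_down m" unfolding Delta_down_def by auto
  moreover have "lc_pos d" unfolding d_def
    by (rule posI[where d="int m"]) auto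
  moreover have "lc_pos (i - d)"
  proof (rule posI[where d=k])
    fix n assume "n < k" then show "fls_nth (i - d) (n) = 0"
      using posE[OF assms] mk unfolding d_def k_def by auto
  next
    show "fls_nth (i - d) (k) > 0" using posE[OF assms] mk unfolding d_def k_def by auto
  qed
  ultimately show ?thesis by blast
qed

lemma less_trans_N: "lc_less t d \<Longrightarrow> N (i - d) \<Longrightarrow> lc_less t i"
  unfolding lc_less_def using NP_add[of "i - d" "d - t"] by (simp add: algebra_simps)

lemma iota_open_iff:
  "iota_open Z V \<longleftrightarrow> V \<subseteq> Z \<and> (\<forall>x\<in>V. \<exists>i. lc_pos i \<and> lc_ball Z x i \<subseteq> V)"
proof -
  have "\<exists>m i. i \<in> Delta_down m \<and> lc_pos i \<and> lc_ball Z x i \<subseteq> V"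
    if H: "lc_pos i" "lc_ball Z x i \<subseteq> V" for x i
  proof -
    obtain m d where d: "d \<in> Delta_down m" "lc_pos d" "lc_pos (i - d)"
      using delta_below[OF H(1)] by blast
    have "lc_ball Z x d \<subseteq> lc_ball Z x i"
      unfolding lc_ball_def using less_trans_N[of _ d i] d(3) N_def by auto
    then show ?thesis using d H by blast
  qed
  then show ?thesis unfolding iota_open_def by blast
qed

theorem mainTheorem14:
  fixes X Y :: "real fls set" and f :: "real fls \<Rightarrow> real fls"
  assumes "f ` X \<subseteq> Y"
  shows "iota_continuous X Y f \<longleftrightarrow> ED X f"
proof
  assume C: "iota_continuous X Y f"
  show "ED X f" unfolding ED_def
  proof (intro ballI allI impI)
    fix c i1 assume c: "c \<in> X" and i1: "lc_pos i1"
    define U where "U = lc_ball Y (f c) i1"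
    have "iota_open Y U" unfolding iota_open_iff
    proof (intro conjI ballI)
      show "U \<subseteq> Y" unfolding U_def lc_ball_def by auto
    next
      fix y assume y: "y \<in> U"
      define r where "r = i1 - lc_abs (y - f c)"
      have r: "lc_pos r" using y unfolding U_def lc_ball_def lc_less_def lc_dist_def r_def by auto
      have "lc_ball Y y r \<subseteq> U"
      proof
        fix z assume z: "z \<in> lc_ball Y y r"
        have "lc_pos (r - lc_abs (z - y))" using z unfolding lc_ball_def lc_less_def lc_dist_def by auto
        moreover have "N (lc_abs (y - f c) + lc_abs (z - y) - lc_abs (z - f c))"
          using triangle[of "y - f c" "z - y"] by simp
        ultimately have "lc_pos ((lc_abs (y - f c) + lc_abs (z - y) - lc_abs (z - f c)) + (r - lc_abs (z - y)))"
          using NP_add by blast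
        then show "z \<in> U" using z unfolding U_def lc_ball_def lc_less_def lc_dist_def r_def
          by (simp add: algebra_simps)
      qed
      then show "\<exists>i. lc_pos i \<and> lc_ball Y y i \<subseteq> U" using r by blast
    qed
    then have O: "iota_open X {x \<in> X. f x \<in> U}" using C unfolding iota_continuous_def by blast
    have "f c \<in> U" using c assms i1 unfolding U_def lc_ball_def lc_less_def lc_dist_def lc_abs_def
      by auto
    then obtain i where i: "lc_pos i" "lc_ball X c i \<subseteq> {x \<in> X. f x \<in> U}"
      using O c unfolding iota_open_iff by blast
    have "\<forall>x\<in>X. lc_less (lc_abs (x - c)) i \<longrightarrow> lc_less (lc_abs (f x - f c)) i1"
    proof (intro ballI impI)
      fix x assume "x \<in> X" "lc_less (lc_abs (x - c)) i"
      then have "x \<in> lc_ball X c i" unfolding lc_ball_def lc_dist_def by auto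
      then have "f x \<in> U" using i by auto
      then show "lc_less (lc_abs (f x - f c)) i1" unfolding U_def lc_ball_def lc_dist_def by auto
    qed
    then show "\<exists>i2. lc_pos i2 \<and> (\<forall>x\<in>X. lc_less (lc_abs (x - c)) i2 \<longrightarrow>
        lc_less (lc_abs (f x - f c)) i1)" using i by blast
  qed
next
  assume E: "ED X f"
  show "iota_continuous X Y f" unfolding iota_continuous_def
  proof (intro allI impI)
    fix U assume U: "iota_open Y U"
    show "iota_open X {x \<in> X. f x \<in> U}" unfolding iota_open_iff
    proof (intro conjI ballI)
      fix c assume c: "c \<in> {x \<in> X. f x \<in> U}"
      then obtain i1 where i1: "lc_pos i1" "lc_ball Y (f c) i1 \<subseteq> U"
        using U unfolding iota_open_iff by blast
      obtain i2 where i2: "lc_pos i2" "\<forall>x\<in>X. lc_less (lc_abs (x - c)) i2 \<longrightarrow>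
        lc_less (lc_abs (f x - f c)) i1" using E c i1 unfolding ED_def by blast
      have "lc_ball X c i2 \<subseteq> {x \<in> X. f x \<in> U}"
      proof
        fix x assume x: "x \<in> lc_ball X c i2"
        then have "x \<in> X" "lc_less (lc_abs (f x - f c)) i1" using i2
          unfolding lc_ball_def lc_dist_def by auto
        then have "f x \<in> lc_ball Y (f c) i1" using assms unfolding lc_ball_def lc_dist_def by auto
        then show "x \<in> {x \<in> X. f x \<in> U}" using i1 \<open>x \<in> X\<close> by auto
      qed
      then show "\<exists>i. lc_pos i \<and> lc_ball X c i \<subseteq> {x \<in> X. f x \<in> U}" using i2 by blast
    qed auto
  qed
qed

end
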